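(* There are constants $C_7$ and $D$ (depending only on $r$) and, for each $\eta>0$, a constant $\varepsilon_5(\eta)>0$ such that for every $\eta>0$, all large enough $n$, every $m\le\varepsilon_5(\eta)n$ and every $U\subset V_n$ with $|U|=m$, $$\mathbb P\big(|\partial U|\le(r-2-\eta)|U|\big)\le C_7\exp\big[-(1+\eta/4)\,m\log(n/m)+D m\big].$$
   Context: Fix an integer $r\ge3$, let $V_n=\{1,\dots,n\}$ with $rn$ even, and let $\mathbb P$ be the law of the random multigraph $G_n$ on $V_n$ obtained by giving each vertex $r$ half-edges and pairing all $rn$ half-edges uniformly at random. Write $y\sim x$ if $y$ and $x$ are joined by an edge of $G_n$. For $U\subset V_n$, $\partial U:=\{y\in U^c: y\sim x\text{ for some }x\in U\}$. *)

theory Defs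
  imports "HOL-Probability.Probability"
begin

text \<open>Configuration model: vertex set {1..n}, each vertex x carries r half-edges (x,i), i<r.\<close>
definition half_edges :: "nat \<Rightarrow> nat \<Rightarrow> (nat \<times> nat) set" where
  "half_edges n r = {1..n} \<times> {..<r}"

text \<open>Perfect matchings of the half-edges, encoded as fixed-point-free involutions.\<close>
definition pairings :: "nat \<Rightarrow> nat \<Rightarrow> ((nat \<times> nat) \<Rightarrow> (nat \<times> nat)) set" where
  "pairings n r = {f \<in> half_edges n r \<rightarrow>\<^sub>E half_edges n r.
                     \<forall>h \<in> half_edges n r. f (f h) = h \<and> f h \<noteq> h}"

definition adj :: "nat \<Rightarrow> ((nat \<times> nat) \<Rightarrow> (nat \<times> nat)) \<Rightarrow> nat \<Rightarrow> nat \<Rightarrow> bool" where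
  "adj r f y x \<longleftrightarrow> (\<exists>i<r. \<exists>j<r. f (x, i) = (y, j))"

definition boundary :: "nat \<Rightarrow> nat \<Rightarrow> ((nat \<times> nat) \<Rightarrow> (nat \<times> nat)) \<Rightarrow> nat set \<Rightarrow> nat set" where
  "boundary n r f U = {y \<in> {1..n} - U. \<exists>x \<in> U. adj r f y x}"

definition config_model :: "nat \<Rightarrow> nat \<Rightarrow> ((nat \<times> nat) \<Rightarrow> (nat \<times> nat)) pmf" where
  "config_model n r = pmf_of_set (pairings n r)"

end

theory Submission
  imports Defs
begin


definition pairs :: "'a set \<Rightarrow> ('a \<Rightarrow> 'a) set" where
  "pairs S = {f \<in> S \<rightarrow>\<^sub>E S. \<forall>h \<in> S. f (f h) = h \<and> f h \<noteq> h}"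

fun pf :: "nat \<Rightarrow> nat" where
  "pf 0 = 1" | "pf (Suc 0) = 0" | "pf (Suc (Suc k)) = Suc k * pf k"

lemma pf_even: "pf n \<noteq> 0 \<Longrightarrow> even n"
  by (induction n rule: pf.induct) auto

lemma pf_pos: "even n \<Longrightarrow> pf n > 0"
  by (induction n rule: pf.induct) auto

lemma pf_grow: "pf x * x ^ j \<le> pf (x + 2 * j)"
proof (induction j)
  case 0 then show ?case by simp
next
  case (Suc j)
  have "pf x * x ^ Suc j = x * (pf x * x ^ j)" by simp
  also have "\<dots> \<le> Suc (x + 2 * j) * pf (x + 2 * j)"
    using Suc by (intro mult_mono) auto
  also have "\<dots> = pf (x + 2 * Suc j)"
    by (simp add: numeral_2_eq_2)
  finally show ?case .
qed

lemma pf_le: "pf (2 * b) \<le> (2 * b) ^ b"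
proof (induction b)
  case 0 then show ?case by simp
next
  case (Suc b)
  have "pf (2 * Suc b) = Suc (2*b) * pf (2 * b)" by (simp add: numeral_2_eq_2)
  also have "\<dots> \<le> (2 * Suc b) * (2 * Suc b) ^ b"
  proof (rule mult_mono)
    have "(2 * b) ^ b \<le> (2 * Suc b) ^ b" by (rule power_mono) auto
    then show "pf (2 * b) \<le> (2 * Suc b) ^ b" using Suc by linarith
  qed auto
  finally show ?case by simp
qed

lemma pairs_in: "f \<in> pairs S \<Longrightarrow> h \<in> S \<Longrightarrow> f h \<in> S \<and> f (f h) = h \<and> f h \<noteq> h"
  unfolding pairs_def by auto

lemma pairs_out: "f \<in> pairs S \<Longrightarrow> h \<notin> S \<Longrightarrow> f h = undefined"
  unfolding pairs_def by auto

lemma card_fix: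
  assumes DS: "D \<subseteq> S" and M: "\<And>x. x \<in> D \<Longrightarrow> M x \<in> D \<and> M (M x) = x \<and> M x \<noteq> x"
  shows "card {f \<in> pairs S. \<forall>x\<in>D. f x = M x} = card (pairs (S - D))"
proof -
  let ?A = "{f \<in> pairs S. \<forall>x\<in>D. f x = M x}"
  let ?res = "\<lambda>f. restrict f (S - D)"
  let ?ext = "\<lambda>g x. if x \<in> D then M x else g x"
  have "bij_betw ?res ?A (pairs (S - D))"
  proof (rule bij_betw_byWitness[where f' = ?ext])
    show "\<forall>f\<in>?A. ?ext (?res f) = f"
    proof
      fix f assume f: "f \<in> ?A"
      show "?ext (?res f) = f"
      proof
        fix x show "?ext (?res f) x = f x"
          using f DS by (cases "x \<in> S") (auto simp: pairs_out)
      qed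
    qed
    show "\<forall>g\<in>pairs (S - D). ?res (?ext g) = g"
    proof
      fix g assume g: "g \<in> pairs (S - D)"
      show "?res (?ext g) = g"
      proof
        fix x show "?res (?ext g) x = g x"
          using g by (cases "x \<in> S - D") (auto simp: pairs_out)
      qed
    qed
    show "?res ` ?A \<subseteq> pairs (S - D)"
    proof
      fix g assume "g \<in> ?res ` ?A"
      then obtain f where f: "f \<in> ?A" and gf: "g = ?res f" by blast
      have "f y \<in> S - D" if y: "y \<in> S - D" for y
      proof -
        have "f y \<in> S" using f y pairs_in by fastforce
        moreover have "f y \<notin> D"
        proof
          assume "f y \<in> D"
          then have "f (f y) = M (f y)" using f by auto
          then have "y = M (f y)" using f y pairs_in by fastforce
          then show False using M[OF \<open>f y \<in> D\<close>] y by auto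
        qed
        ultimately show ?thesis by blast
      qed
      then have g1: "g \<in> (S - D) \<rightarrow>\<^sub>E (S - D)" unfolding gf by auto
      have g2: "g (g y) = y \<and> g y \<noteq> y" if y: "y \<in> S - D" for y
      proof -
        have fy: "f y \<in> S - D" using \<open>\<And>y. y \<in> S - D \<Longrightarrow> f y \<in> S - D\<close> y .
        have "g (g y) = f (f y)" unfolding gf using y fy by simp
        moreover have "f (f y) = y \<and> f y \<noteq> y" using pairs_in[of f S y] f y by blast
        moreover have "g y = f y" unfolding gf using y by simp
        ultimately show ?thesis by simp
      qed
      show "g \<in> pairs (S - D)" unfolding pairs_def using g1 g2 by blast
    qed
    show "?ext ` pairs (S - D) \<subseteq> ?A"
    proof
      fix f assume "f \<in> ?ext ` pairs (S - D)"
      then obtain g where g: "g \<in> pairs (S - D)" and fg: "f = ?ext g" by blast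
      have "f \<in> S \<rightarrow>\<^sub>E S"
        using g M DS pairs_in[OF g] pairs_out[OF g] unfolding fg by (auto simp: PiE_iff extensional_def)
      moreover have "\<forall>h\<in>S. f (f h) = h \<and> f h \<noteq> h"
        using g M pairs_in[OF g] unfolding fg by auto
      ultimately show "f \<in> ?A" unfolding pairs_def fg by auto
    qed
  qed
  then show ?thesis by (rule bij_betw_same_card)
qed

lemma finite_pairs: "finite S \<Longrightarrow> finite (pairs S)"
  unfolding pairs_def by (rule finite_subset[of _ "S \<rightarrow>\<^sub>E S"]) (auto intro: finite_PiE)

lemma card_pairs: "finite S \<Longrightarrow> card (pairs S) = pf (card S)"
proof (induction "card S" arbitrary: S rule: less_induct)
  case less
  show ?case
  proof (cases "card S")
    case 0
    then have "S = {}" using less by auto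
    then have "pairs S = {\<lambda>x. undefined}" unfolding pairs_def by auto
    then show ?thesis using 0 by simp
  next
    case (Suc k)
    then have "S \<noteq> {}" by auto
    then obtain a where a: "a \<in> S" by blast
    show ?thesis
    proof (cases k)
      case 0
      then have "S = {a}" using Suc a less(2) by (metis One_nat_def card_1_singletonE singletonD)
      then have "pairs S = {}" unfolding pairs_def by auto
      then show ?thesis using Suc 0 by simp
    next
      case (Suc j)
      have eq: "pairs S = (\<Union>b\<in>S - {a}. {f \<in> pairs S. f a = b})"
        using a pairs_in by fastforce
      have cb: "card {f \<in> pairs S. f a = b} = pf j" if b: "b \<in> S - {a}" for b
      proof -
        let ?M = "\<lambda>x. if x = a then b else a"
        have "{f \<in> pairs S. f a = b} = {f \<in> pairs S. \<forall>x\<in>{a,b}. f x = ?M x}"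
        proof (intro set_eqI iffI)
          fix f assume f: "f \<in> {f \<in> pairs S. f a = b}"
          then have "f b = a" using pairs_in[of f S a] a by auto
          then show "f \<in> {f \<in> pairs S. \<forall>x\<in>{a,b}. f x = ?M x}" using f b by auto
        next
          fix f assume "f \<in> {f \<in> pairs S. \<forall>x\<in>{a,b}. f x = ?M x}"
          then show "f \<in> {f \<in> pairs S. f a = b}" by auto
        qed
        also have "card \<dots> = card (pairs (S - {a,b}))"
          using a b by (intro card_fix) auto
        also have "\<dots> = pf (card (S - {a,b}))"
          using less a b \<open>card S = Suc k\<close> by (intro less(1)) (auto simp: card_Diff_subset)
        also have "card (S - {a,b}) = j"
          using less a b \<open>card S = Suc k\<close> Suc by (auto simp: card_Diff_subset)
        finally show ?thesis .
      qed
      have "card (pairs S) = (\<Sum>b\<in>S - {a}. card {f \<in> pairs S. f a = b})"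
      proof -
        have "card (pairs S) = card (\<Union>b\<in>S - {a}. {f \<in> pairs S. f a = b})"
          by (rule arg_cong[OF eq])
        also have "\<dots> = (\<Sum>b\<in>S - {a}. card {f \<in> pairs S. f a = b})"
        proof (rule card_UN_disjoint)
          show "finite (S - {a})" using less(2) by simp
          show "\<forall>i\<in>S - {a}. finite {f \<in> pairs S. f a = i}"
            using finite_pairs[OF less(2)] by simp
          show "\<forall>i\<in>S - {a}. \<forall>j\<in>S - {a}. i \<noteq> j \<longrightarrow> {f \<in> pairs S. f a = i} \<inter> {f \<in> pairs S. f a = j} = {}"
            by blast
        qed
        finally show ?thesis .
      qed
      also have "\<dots> = (\<Sum>b\<in>S - {a}. pf j)" using cb by simp
      also have "\<dots> = Suc j * pf j" using a less(2) \<open>card S = Suc k\<close> Suc by simp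
      finally show ?thesis using \<open>card S = Suc k\<close> Suc by simp
    qed
  qed
qed



lemma agree_bound:
  assumes fin: "finite S" and XS: "X \<subseteq> S" and f0: "f0 \<in> pairs S" and IX: "I \<subseteq> X"
    and fI: "f0 ` I \<subseteq> X" and fO: "f0 ` (X - I) \<inter> X = {}"
    and ev: "even (card S)" and L: "2 * card X < card S"
  shows "real (card {f \<in> pairs S. \<forall>x\<in>X. f x = f0 x})
         \<le> real (card (pairs S)) * (1 / (real (card S) - 2 * real (card X))) ^ ((card X + card (X - I)) div 2)"
proof -
  define D where "D = X \<union> f0 ` X"
  have f0S: "\<And>x. x \<in> S \<Longrightarrow> f0 x \<in> S \<and> f0 (f0 x) = x \<and> f0 x \<noteq> x" using pairs_in[OF f0] by blast
  have DS: "D \<subseteq> S" unfolding D_def using XS f0S by auto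
  have eqA: "{f \<in> pairs S. \<forall>x\<in>X. f x = f0 x} = {f \<in> pairs S. \<forall>x\<in>D. f x = f0 x}"
  proof (intro set_eqI iffI)
    fix f assume f: "f \<in> {f \<in> pairs S. \<forall>x\<in>X. f x = f0 x}"
    have "f (f0 x) = f0 (f0 x)" if "x \<in> X" for x
    proof -
      have "f (f0 x) = f (f x)" using f that by auto
      also have "\<dots> = x" using pairs_in[of f S x] f that XS by auto
      finally show ?thesis using f0S that XS by auto
    qed
    then show "f \<in> {f \<in> pairs S. \<forall>x\<in>D. f x = f0 x}" using f unfolding D_def by auto
  qed (auto simp: D_def)
  have cA: "card {f \<in> pairs S. \<forall>x\<in>X. f x = f0 x} = pf (card S - card D)"
    unfolding eqA
    apply (subst card_fix[OF DS])
    subgoal for x using f0S DS unfolding D_def by auto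
    using card_pairs[of "S - D"] fin DS by (simp add: card_Diff_subset finite_subset)
  have D2: "D = X \<union> f0 ` (X - I)" unfolding D_def using fI IX by auto
  have injf: "inj_on f0 S" by (rule inj_onI) (metis f0S)
  have cD: "card D = card X + card (X - I)"
    unfolding D2 using fO fin XS
    by (subst card_Un_disjoint) (auto intro: finite_subset card_image inj_on_subset[OF injf] simp: card_image[OF inj_on_subset[OF injf]])
  have cDle: "card D \<le> 2 * card X" using cD card_mono[of X "X - I"] fin XS by (auto intro: finite_subset)
  show ?thesis
  proof (cases "pf (card S - card D) = 0")
    case True
    have "0 < real (card S) - 2 * real (card X)" using L by linarith
    then show ?thesis using cA True by simp
  next
    case False
    then have "even (card S - card D)" using pf_even by blast
    have DleS: "card D \<le> card S" using cDle L by linarith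
    have "even (card S - (card S - card D))" using ev \<open>even (card S - card D)\<close> by (rule dvd_diff_nat)
    then have evD: "even (card D)" using DleS by simp
    define j where "j = card D div 2"
    have j2: "card D = 2 * j" using evD j_def by simp
    have jeq: "j = (card X + card (X - I)) div 2" using j_def cD by simp
    have "pf (card S - card D) * (card S - card D) ^ j \<le> pf (card S - card D + 2 * j)" by (rule pf_grow)
    also have "card S - card D + 2 * j = card S" using j2 cDle L by simp
    finally have le1: "real (pf (card S - card D)) * real (card S - card D) ^ j \<le> real (pf (card S))"
      by (metis of_nat_le_iff of_nat_mult of_nat_power)
    have Lpos: "0 < real (card S) - 2 * real (card X)" using L by linarith
    have Lle: "real (card S) - 2 * real (card X) \<le> real (card S - card D)" using cDle L by (simp add: of_nat_diff)
    have "real (pf (card S - card D)) \<le> real (pf (card S)) / real (card S - card D) ^ j"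
      using le1 Lpos Lle by (simp add: field_simps)
    also have "\<dots> \<le> real (pf (card S)) / (real (card S) - 2 * real (card X)) ^ j"
      using Lpos Lle by (intro divide_left_mono power_mono mult_pos_pos zero_less_power) auto
    finally show ?thesis using cA card_pairs[OF fin] jeq by (simp add: power_one_over divide_inverse power_inverse)
  qed
qed



definition Xs :: "nat \<Rightarrow> nat set \<Rightarrow> (nat \<times> nat) set" where "Xs r U = U \<times> {..<r}"

definition Tset :: "nat \<Rightarrow> nat \<Rightarrow> nat set \<Rightarrow> real \<Rightarrow> (nat \<times> nat) set \<Rightarrow> nat set set" where
  "Tset n r U s0 I = {T. T \<subseteq> {1..n} - U \<and> card T \<le> card (Xs r U - I) \<and> real (card T) \<le> s0}"

definition Enc where
  "Enc n r U s0 = Sigma (Sigma (Pow (Xs r U)) (Tset n r U s0))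
      (\<lambda>(I,T). pairs I \<times> ((Xs r U - I) \<rightarrow>\<^sub>E (T \<times> {..<r})))"

definition phi :: "(((nat \<times> nat) set \<times> nat set) \<times> ((nat \<times> nat \<Rightarrow> nat \<times> nat) \<times> (nat \<times> nat \<Rightarrow> nat \<times> nat))) \<Rightarrow> nat \<times> nat \<Rightarrow> nat \<times> nat" where
  "phi e = (\<lambda>x. if x \<in> fst (fst e) then fst (snd e) x else snd (snd e) x)"

definition Aset where
  "Aset n r U e = {f \<in> pairs (half_edges n r). \<forall>x\<in>Xs r U. f x = phi e x}"

lemma pairings_eq: "pairings n r = pairs (half_edges n r)"
  unfolding pairings_def pairs_def by simp

lemma finite_Xs: "finite (Xs r U) \<longleftrightarrow> finite U \<or> r = 0"
  unfolding Xs_def by (auto simp: finite_cartesian_product_iff)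

lemma cover:
  assumes U: "U \<subseteq> {1..n}"
  shows "pairs (half_edges n r) \<inter> {f. real (card (boundary n r f U)) \<le> s0} \<subseteq> (\<Union>e\<in>Enc n r U s0. Aset n r U e)"
proof
  fix f assume f: "f \<in> pairs (half_edges n r) \<inter> {f. real (card (boundary n r f U)) \<le> s0}"
  let ?S = "half_edges n r" and ?X = "Xs r U"
  have fP: "f \<in> pairs ?S" using f by (rule IntD1)
  have fS: "\<And>x. x \<in> ?S \<Longrightarrow> f x \<in> ?S \<and> f (f x) = x \<and> f x \<noteq> x" by (rule pairs_in[OF fP])
  have XS: "?X \<subseteq> ?S" using U unfolding Xs_def half_edges_def by auto
  have finX: "finite ?X" using U finite_subset unfolding Xs_def by (auto intro: finite_cartesian_product)
  define I where "I = {x \<in> ?X. f x \<in> ?X}"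
  define T where "T = fst ` f ` (?X - I)"
  define p where "p = restrict f I"
  define h where "h = restrict f (?X - I)"
  have IX: "I \<subseteq> ?X" unfolding I_def by auto
  have p: "p \<in> pairs I"
  proof -
    have "f x \<in> I" if x: "x \<in> I" for x
    proof -
      have xX: "x \<in> ?X" and fxX: "f x \<in> ?X" using x unfolding I_def by auto
      have "f (f x) = x" using fS[of x] xX XS by auto
      then show ?thesis using xX fxX unfolding I_def by auto
    qed
    then show ?thesis unfolding p_def pairs_def using fS XS IX by auto
  qed
  have fO: "f x \<in> T \<times> {..<r}" if x: "x \<in> ?X - I" for x
  proof -
    have xS: "x \<in> ?S" using XS x by auto
    have "f x \<in> ?S" using fS[OF xS] by blast
    then have "snd (f x) < r" unfolding half_edges_def by auto
    moreover have "fst (f x) \<in> T" unfolding T_def using x by auto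
    ultimately show ?thesis by (cases "f x") auto
  qed
  have h: "h \<in> (?X - I) \<rightarrow>\<^sub>E (T \<times> {..<r})" unfolding h_def using fO by auto
  have Tb: "T \<subseteq> boundary n r f U"
  proof
    fix y assume "y \<in> T"
    then obtain x where x: "x \<in> ?X - I" and y: "y = fst (f x)" unfolding T_def by auto
    obtain u i where xu: "x = (u, i)" and u: "u \<in> U" and i: "i < r" using x unfolding Xs_def by auto
    have xS: "x \<in> ?S" using XS x by auto
    have fx: "f x \<in> ?S" using fS[OF xS] by blast
    obtain j where fxj: "f x = (y, j)" and j: "j < r" using fx y unfolding half_edges_def by (cases "f x") auto
    have yn: "y \<in> {1..n}" using fx fxj unfolding half_edges_def by auto
    have yU: "y \<notin> U" using x fxj j unfolding I_def Xs_def by auto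
    have "adj r f y u" unfolding adj_def using i j fxj xu by auto
    then show "y \<in> boundary n r f U" unfolding boundary_def using yn yU u by auto
  qed
  have TU: "T \<subseteq> {1..n} - U" using Tb unfolding boundary_def by auto
  have cT1: "card T \<le> card (?X - I)" unfolding T_def using finX
    by (meson card_image_le finite_Diff finite_imageI le_trans)
  have cT2: "real (card T) \<le> s0"
  proof -
    have "card T \<le> card (boundary n r f U)"
      by (rule card_mono[OF _ Tb]) (auto simp: boundary_def)
    then show ?thesis using f by auto
  qed
  have e: "((I,T),(p,h)) \<in> Enc n r U s0"
    unfolding Enc_def Tset_def using IX TU cT1 cT2 p h by auto
  have "f \<in> Aset n r U ((I,T),(p,h))"
    unfolding Aset_def phi_def p_def h_def using f by auto
  then show "f \<in> (\<Union>e\<in>Enc n r U s0. Aset n r U e)" using e by blast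
qed



lemma card_half_edges: "card (half_edges n r) = n * r"
  unfolding half_edges_def by (simp add: card_cartesian_product)

lemma A_bound:
  assumes U: "U \<subseteq> {1..n}" and ev: "even (n * r)" and L: "2 * card (Xs r U) < n * r"
    and e: "((I,T),(p,h)) \<in> Enc n r U s0"
  shows "real (card (Aset n r U ((I,T),(p,h))))
     \<le> real (card (pairs (half_edges n r))) * (1 / (real (n * r) - 2 * real (card (Xs r U)))) ^ ((card (Xs r U) + card (Xs r U - I)) div 2)"
proof (cases "Aset n r U ((I,T),(p,h)) = {}")
  case True
  have "0 < real (n * r) - 2 * real (card (Xs r U))" using L by (metis of_nat_less_iff of_nat_mult of_nat_numeral diff_gt_0_iff_gt)
  then show ?thesis using True by simp
next
  case False
  then obtain f0 where f0: "f0 \<in> Aset n r U ((I,T),(p,h))" by blast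
  let ?S = "half_edges n r" and ?X = "Xs r U"
  have eqA: "Aset n r U ((I,T),(p,h)) = {f \<in> pairs ?S. \<forall>x\<in>?X. f x = f0 x}"
    using f0 unfolding Aset_def by auto
  have XS: "?X \<subseteq> ?S" using U unfolding Xs_def half_edges_def by auto
  have IX: "I \<subseteq> ?X" and TU: "T \<subseteq> {1..n} - U" and p: "p \<in> pairs I"
    and h: "h \<in> (?X - I) \<rightarrow>\<^sub>E (T \<times> {..<r})"
    using e unfolding Enc_def Tset_def by auto
  have agree: "\<And>x. x \<in> ?X \<Longrightarrow> f0 x = (if x \<in> I then p x else h x)"
    using f0 unfolding Aset_def phi_def by auto
  have fI: "f0 ` I \<subseteq> ?X"
  proof
    fix y assume "y \<in> f0 ` I"
    then obtain x where x: "x \<in> I" and y: "y = f0 x" by blast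
    have "f0 x = p x" using agree[of x] x IX by auto
    moreover have "p x \<in> I" using pairs_in[OF p x] by blast
    ultimately show "y \<in> ?X" using y IX by auto
  qed
  have fO: "f0 ` (?X - I) \<inter> ?X = {}"
  proof -
    have "f0 x \<notin> ?X" if x: "x \<in> ?X - I" for x
    proof -
      have "h x \<in> T \<times> {..<r}" using h x by auto
      moreover have "f0 x = h x" using agree[of x] x by auto
      ultimately have "fst (f0 x) \<in> T" by auto
      then have "fst (f0 x) \<notin> U" using TU by auto
      then show ?thesis unfolding Xs_def by auto
    qed
    then show ?thesis by blast
  qed
  show ?thesis unfolding eqA
    using agree_bound[of ?S ?X f0 I] XS f0 IX fI fO ev L
    by (simp add: card_half_edges Aset_def finite_subset half_edges_def)
qed



lemma pow_le_fact_exp: "real t ^ t \<le> fact t * exp (real t)"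
proof (induction t)
  case 0 then show ?case by simp
next
  case (Suc t)
  show ?case
  proof (cases "t = 0")
    case True then show ?thesis using exp_ge_add_one_self[of 1] by simp
  next
    case False
    then have tp: "real t > 0" by simp
    have "real (Suc t) ^ t = real t ^ t * (1 + 1 / real t) ^ t"
      using tp by (simp add: power_mult_distrib[symmetric] field_simps)
    also have "(1 + 1 / real t) ^ t \<le> exp (1 / real t) ^ t"
      by (intro power_mono exp_ge_add_one_self) (use tp in auto)
    also have "exp (1 / real t) ^ t = exp 1"
      using tp by (simp add: exp_of_nat_mult[symmetric])
    finally have a: "real (Suc t) ^ t \<le> real t ^ t * exp 1"
      by (simp add: mult_left_mono)
    have "real (Suc t) ^ Suc t = real (Suc t) * real (Suc t) ^ t" by simp
    also have "\<dots> \<le> real (Suc t) * (fact t * exp (real t) * exp 1)"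
      using a Suc by (intro mult_left_mono) (auto intro: order_trans mult_right_mono)
    also have "\<dots> = fact (Suc t) * exp (real (Suc t))"
      by (simp add: exp_add[symmetric] algebra_simps)
    finally show ?thesis .
  qed
qed

lemma choose_fact_le: "real (n choose t) * fact t \<le> real n ^ t"
proof (cases "t \<le> n")
  case True
  have "fact t * fact (n - t) * (n choose t) = (fact n :: nat)" by (rule binomial_fact_lemma[OF True])
  then have "(n choose t) * fact t = (fact n :: nat) div fact (n - t)"
    by (metis fact_nonzero mult.commute nonzero_mult_div_cancel_left mult.assoc)
  also have "\<dots> \<le> n ^ t" by (rule fact_div_fact_le_pow[OF True])
  finally have "(n choose t) * fact t \<le> n ^ t" .
  then show ?thesis by (metis of_nat_fact of_nat_le_iff of_nat_mult of_nat_power)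
next
  case False then show ?thesis by (simp add: binomial_eq_0)
qed

lemma core:
  fixes n m r a b t :: nat and \<eta> :: real
  assumes m: "1 \<le> m" and mn: "4 * m \<le> n" and r: "1 \<le> r" and ab: "2 * b + a = m * r"
    and ta: "t \<le> a" and ts: "real t \<le> (real r - 2 - \<eta>) * real m"
  shows "real (n choose t) * real (pf (2 * b)) * (real t * real r) ^ a
           * (1 / (real (n * r) - 2 * real (m * r))) ^ ((m * r + a) div 2)
         \<le> (2 * exp 1 * real r) ^ (m * r) * (real m / real n) powr ((1 + \<eta> / 2) * real m)"
proof -
  define k where "k = a + b - t"
  have jeq: "(m * r + a) div 2 = a + b" using ab by (metis add.commute add.left_commute div_mult_self1_is_m mult_2 zero_less_numeral)
  have np: "real n > 0" using m mn by simp
  have rp: "real r > 0" using r by simp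
  have mp: "real m > 0" using m by simp
  have half: "real r * real n / 2 \<le> real (n * r) - 2 * real (m * r)"
  proof -
    have h4: "real (4 * m) \<le> real n" using mn by (rule of_nat_mono)
    have "real r * real (4 * m) \<le> real r * real n" by (rule mult_left_mono[OF h4]) simp
    then have h': "4 * (real r * real m) \<le> real r * real n" by (simp add: algebra_simps)
    have e1: "real (n * r) = real r * real n" by simp
    have e2: "real (m * r) = real r * real m" by simp
    show ?thesis unfolding e1 e2 using h' by linarith
  qed
  have q: "1 / (real (n * r) - 2 * real (m * r)) \<le> 2 / (real r * real n)"
  proof -
    have "real r * real n / 2 \<le> real (n * r) - 2 * real (m * r)" by (rule half)
    moreover have "0 < real r * real n / 2" using np rp by simp
    ultimately have "1 / (real (n * r) - 2 * real (m * r)) \<le> 1 / (real r * real n / 2)"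
      by (intro divide_left_mono mult_pos_pos) linarith+
    then show ?thesis by simp
  qed
  have q0: "0 \<le> 1 / (real (n * r) - 2 * real (m * r))"
  proof -
    have "real r * real n / 2 \<le> real (n * r) - 2 * real (m * r)" by (rule half)
    then show ?thesis using np rp by (smt (verit) divide_nonneg_nonneg zero_less_mult_iff)
  qed
  have pfb: "real (pf (2 * b)) \<le> (real m * real r) ^ b"
  proof -
    have "pf (2 * b) \<le> (2 * b) ^ b" by (rule pf_le)
    also have "\<dots> \<le> (m * r) ^ b" using ab by (intro power_mono) auto
    finally show ?thesis by (metis of_nat_le_iff of_nat_mult of_nat_power)
  qed
  have tpow: "real t ^ a \<le> real t ^ t * (real m * real r) ^ (a - t)"
  proof -
    have "real t ^ a = real t ^ t * real t ^ (a - t)" using ta by (simp add: power_add[symmetric])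
    also have "real t ^ (a - t) \<le> (real m * real r) ^ (a - t)"
      using ta ab by (intro power_mono) (auto, metis le_add2 le_trans of_nat_le_iff of_nat_mult)
    finally show ?thesis by (simp add: mult_left_mono)
  qed
  have Ct: "real (n choose t) * real t ^ t \<le> real n ^ t * exp (real t)"
  proof -
    have "real (n choose t) * real t ^ t \<le> real (n choose t) * (fact t * exp (real t))"
      by (intro mult_left_mono pow_le_fact_exp) auto
    also have "\<dots> = (real (n choose t) * fact t) * exp (real t)" by simp
    also have "\<dots> \<le> real n ^ t * exp (real t)"
      by (intro mult_right_mono choose_fact_le) auto
    finally show ?thesis .
  qed
  have "real (n choose t) * real (pf (2 * b)) * (real t * real r) ^ a
           * (1 / (real (n * r) - 2 * real (m * r))) ^ ((m * r + a) div 2)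
      \<le> real (n choose t) * (real m * real r) ^ b * (real t ^ t * (real m * real r) ^ (a - t) * real r ^ a)
           * (2 / (real r * real n)) ^ (a + b)"
    unfolding jeq power_mult_distrib
    using q0 by (intro mult_mono pfb[unfolded power_mult_distrib] tpow[unfolded power_mult_distrib] q power_mono q0 zero_le_power) auto
  also have "\<dots> = (real (n choose t) * real t ^ t) * ((real m * real r) ^ k * real r ^ a * 2 ^ (a + b)) / ((real r * real n) ^ t * (real r * real n) ^ k)"
  proof -
    obtain d where d: "a = t + d" using ta le_Suc_ex by blast
    have kd: "k = b + d" unfolding k_def d by simp
    have ad: "a - t = d" unfolding d by simp
    show ?thesis unfolding kd ad unfolding d using np rp
      by (simp add: power_add power_divide power_mult_distrib field_simps)
  qed
  also have "\<dots> \<le> (real n ^ t * exp (real t)) * ((real m * real r) ^ k * real r ^ a * 2 ^ (a + b)) / ((real r * real n) ^ t * (real r * real n) ^ k)"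
    using Ct np rp mp by (intro divide_right_mono mult_right_mono) auto
  also have "\<dots> = exp (real t) * 2 ^ (a + b) * (real r ^ a / real r ^ t) * (real m / real n) ^ k"
    using np rp by (simp add: power_mult_distrib power_divide field_simps)
  also have "\<dots> \<le> exp (real (m * r)) * 2 ^ (m * r) * real r ^ (m * r) * (real m / real n) ^ k"
  proof -
    have "t \<le> m * r" using ta ab by linarith
    then have "real t \<le> real (m * r)" by (rule of_nat_mono)
    then have "exp (real t) \<le> exp (real (m * r))" by simp
    moreover have "(2::real) ^ (a + b) \<le> 2 ^ (m * r)" using ab by (intro power_increasing) auto
    moreover have "real r ^ a / real r ^ t \<le> real r ^ (m * r)"
    proof -
      have "real r ^ a / real r ^ t \<le> real r ^ a" using rp r by (simp add: divide_le_eq one_le_power)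
      also have "\<dots> \<le> real r ^ (m * r)" using ab r by (intro power_increasing) auto
      finally show ?thesis .
    qed
    ultimately show ?thesis using np mp rp
      by (intro mult_mono) auto
  qed
  also have "\<dots> = (2 * exp 1 * real r) ^ (m * r) * (real m / real n) ^ k"
    by (simp add: power_mult_distrib exp_of_nat_mult[symmetric] mult.commute)
  also have "(real m / real n) ^ k \<le> (real m / real n) powr ((1 + \<eta> / 2) * real m)"
  proof -
    have "(real m / real n) ^ k = (real m / real n) powr (real k)" using np mp by (simp add: powr_realpow)
    also have "\<dots> \<le> (real m / real n) powr ((1 + \<eta> / 2) * real m)"
    proof (rule powr_mono')
      have "2 * k + 2 * t = m * r + a" using ab ta unfolding k_def by linarith
      then have "real (2 * k + 2 * t) = real (m * r + a)" by (rule arg_cong)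
      then have kk: "2 * real k + 2 * real t = real m * real r + real a" by simp
      have ta': "real t \<le> real a" using ta by (rule of_nat_mono)
      from kk ta' ts show "(1 + \<eta> / 2) * real m \<le> real k" by (simp add: algebra_simps)
      show "0 \<le> real m / real n" by simp
      show "real m / real n \<le> 1" using mn np by simp
    qed
    finally show ?thesis .
  qed
  finally show ?thesis by (simp add: mult_left_mono)
qed



lemma final_arith:
  fixes n m r :: nat and \<eta> :: real
  assumes m: "1 \<le> m" and mn: "m \<le> n" and r: "1 \<le> r" and eta: "\<eta> \<ge> 0"
  shows "2 ^ (m * r) * real (m * r + 1) * ((2 * exp 1 * real r) ^ (m * r) * (real m / real n) powr ((1 + \<eta> / 2) * real m))
    \<le> exp (- (1 + \<eta> / 4) * real m * ln (real n / real m) + (real r * (2 + ln (4 * real r))) * real m)"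
proof -
  have np: "real n > 0" using m mn by simp
  have mp: "real m > 0" using m by simp
  have rp: "real r > 0" using r by simp
  have lnp: "ln (real n / real m) \<ge> 0" using mn mp by simp
  have A: "(real m / real n) powr ((1 + \<eta> / 2) * real m) \<le> exp (- (1 + \<eta> / 4) * real m * ln (real n / real m))"
  proof -
    have "(real m / real n) powr ((1 + \<eta> / 2) * real m) = exp (((1 + \<eta> / 2) * real m) * ln (real m / real n))"
      using np mp by (simp add: powr_def)
    also have "ln (real m / real n) = - ln (real n / real m)" using np mp by (simp add: ln_div)
    also have "exp (((1 + \<eta> / 2) * real m) * - ln (real n / real m)) \<le> exp (- (1 + \<eta> / 4) * real m * ln (real n / real m))"
    proof -
      have "(1 + \<eta> / 4) * (real m * ln (real n / real m)) \<le> (1 + \<eta> / 2) * (real m * ln (real n / real m))"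
        using lnp eta mp by (intro mult_right_mono) auto
      then show ?thesis by (simp add: algebra_simps)
    qed
    finally show ?thesis .
  qed
  have B: "2 ^ (m * r) * real (m * r + 1) * (2 * exp 1 * real r) ^ (m * r) \<le> exp ((real r * (2 + ln (4 * real r))) * real m)"
  proof -
    have "real (m * r + 1) \<le> exp (real (m * r))" using exp_ge_add_one_self[of "real (m*r)"] by simp
    moreover have "(2::real) ^ (m * r) * (2 * exp 1 * real r) ^ (m * r) = exp (real (m * r) * (1 + ln (4 * real r)))"
    proof -
      have "(2::real) ^ (m * r) * (2 * exp 1 * real r) ^ (m * r) = (exp (1 + ln (4 * real r))) ^ (m * r)"
      proof -
        have "exp (1 + ln (4 * real r)) = 2 * (2 * exp 1 * real r)" using rp by (simp add: exp_add)
        then have "(exp (1 + ln (4 * real r))) ^ (m * r) = (2 * (2 * exp 1 * real r)) ^ (m * r)" by simp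
        also have "\<dots> = (2::real) ^ (m * r) * (2 * exp 1 * real r) ^ (m * r)" by (rule power_mult_distrib)
        finally show ?thesis by simp
      qed
      also have "\<dots> = exp (real (m * r) * (1 + ln (4 * real r)))" by (simp add: exp_of_nat_mult[symmetric])
      finally show ?thesis .
    qed
    ultimately have "2 ^ (m * r) * real (m * r + 1) * (2 * exp 1 * real r) ^ (m * r) \<le> exp (real (m * r) * (1 + ln (4 * real r))) * exp (real (m * r))"
      by (smt (verit, best) exp_gt_zero mult.commute mult.left_commute mult_left_mono zero_le_power)
    also have "\<dots> = exp ((real r * (2 + ln (4 * real r))) * real m)"
      by (simp add: exp_add[symmetric] algebra_simps)
    finally show ?thesis .
  qed
  have "2 ^ (m * r) * real (m * r + 1) * ((2 * exp 1 * real r) ^ (m * r) * (real m / real n) powr ((1 + \<eta> / 2) * real m))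
      = (2 ^ (m * r) * real (m * r + 1) * (2 * exp 1 * real r) ^ (m * r)) * (real m / real n) powr ((1 + \<eta> / 2) * real m)"
    by simp
  also have "\<dots> \<le> exp ((real r * (2 + ln (4 * real r))) * real m) * exp (- (1 + \<eta> / 4) * real m * ln (real n / real m))"
    using A B by (intro mult_mono) auto
  also have "\<dots> = exp (- (1 + \<eta> / 4) * real m * ln (real n / real m) + (real r * (2 + ln (4 * real r))) * real m)"
    by (simp add: exp_add[symmetric])
  finally show ?thesis .
qed



lemma T_sum_bound:
  fixes n m r :: nat and \<eta> :: real and U :: "nat set"
  assumes m: "1 \<le> m" and mn: "4 * m \<le> n" and r: "1 \<le> r" and U: "U \<subseteq> {1..n}" and cU: "card U = m"
    and I: "I \<subseteq> Xs r U"
  defines "s0 \<equiv> (real r - 2 - \<eta>) * real m"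
  defines "Bnd \<equiv> (2 * exp 1 * real r) ^ (m * r) * (real m / real n) powr ((1 + \<eta> / 2) * real m)"
  shows "(\<Sum>T\<in>Tset n r U s0 I. real (pf (card I)) * (real (card T) * real r) ^ card (Xs r U - I)
            * (1 / (real (n * r) - 2 * real (m * r))) ^ ((m * r + card (Xs r U - I)) div 2))
         \<le> real (m * r + 1) * Bnd"
proof -
  let ?X = "Xs r U"
  let ?a = "card (?X - I)"
  let ?G = "\<lambda>t. real (pf (card I)) * (real t * real r) ^ ?a
            * (1 / (real (n * r) - 2 * real (m * r))) ^ ((m * r + ?a) div 2)"
  have finU: "finite U" using U finite_subset by blast
  have finX: "finite ?X" using finU unfolding Xs_def by simp
  have cX: "card ?X = m * r" unfolding Xs_def using cU by (simp add: card_cartesian_product)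
  have finT: "finite (Tset n r U s0 I)"
    by (rule finite_subset[of _ "Pow {1..n}"]) (auto simp: Tset_def)
  have cIa: "card I + ?a = m * r" using I finX cX by (metis card_Diff_subset card_mono finite_subset le_add_diff_inverse)
  have L0: "0 \<le> 1 / (real (n * r) - 2 * real (m * r))"
  proof -
    have "real (2 * (m * r)) \<le> real (n * r)" using mn by (intro of_nat_mono) (simp add: mult_right_mono)
    then show ?thesis by simp
  qed
  have Bnd0: "0 \<le> Bnd" unfolding Bnd_def using r by simp
  have each: "real (card {T \<in> Tset n r U s0 I. card T = t}) * ?G t \<le> Bnd" for t
  proof (cases "{T \<in> Tset n r U s0 I. card T = t} = {}")
    case True then show ?thesis unfolding True using Bnd0 by simp
  next
    case False
    then obtain T0 where T0: "T0 \<in> Tset n r U s0 I" "card T0 = t" by blast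
    have ta: "t \<le> ?a" and ts: "real t \<le> s0" using T0 unfolding Tset_def by auto
    have cnt: "card {T \<in> Tset n r U s0 I. card T = t} \<le> n choose t"
    proof -
      have "card {T \<in> Tset n r U s0 I. card T = t} \<le> card {B. B \<subseteq> {1..n} \<and> card B = t}"
        by (rule card_mono) (auto simp: Tset_def)
      also have "\<dots> = n choose t" by (simp add: n_subsets)
      finally show ?thesis .
    qed
    show ?thesis
    proof (cases "even (card I)")
      case False
      then have "pf (card I) = 0" using pf_even by blast
      then show ?thesis using Bnd0 by simp
    next
      case True
      then obtain b where b: "card I = 2 * b" by blast
      have G0: "0 \<le> ?G t" using L0 by simp
      have "real (card {T \<in> Tset n r U s0 I. card T = t}) * ?G t \<le> real (n choose t) * ?G t"
        using cnt G0 by (intro mult_right_mono) auto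
      also have "\<dots> \<le> Bnd"
        unfolding Bnd_def b using core[of m n r b ?a t \<eta>] m mn r cIa b ta ts unfolding s0_def
        by (simp add: mult.assoc)
      finally show ?thesis .
    qed
  qed
  have "(\<Sum>T\<in>Tset n r U s0 I. ?G (card T))
      = (\<Sum>t\<in>{..m*r}. \<Sum>T\<in>{T \<in> Tset n r U s0 I. card T = t}. ?G (card T))"
  proof (rule sum.group[symmetric, OF finT])
    show "finite {..m*r}" by simp
    show "card ` Tset n r U s0 I \<subseteq> {..m * r}"
      using cIa by (auto simp: Tset_def)
  qed
  also have "\<dots> = (\<Sum>t\<in>{..m*r}. real (card {T \<in> Tset n r U s0 I. card T = t}) * ?G t)"
    by (intro sum.cong refl) simp
  also have "\<dots> \<le> (\<Sum>t\<in>{..m*r}. Bnd)" by (intro sum_mono each)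
  also have "\<dots> = real (m * r + 1) * Bnd" by simp
  finally show ?thesis by simp
qed



lemma sum_Sigma':
  assumes "finite A" "\<And>a. a \<in> A \<Longrightarrow> finite (B a)"
  shows "(\<Sum>e\<in>Sigma A B. g e) = (\<Sum>a\<in>A. \<Sum>b\<in>B a. g (a, b))"
  using assms by (subst sum.Sigma) auto

lemma main_bound:
  fixes n m r :: nat and \<eta> :: real and U :: "nat set"
  assumes r: "1 \<le> r" and ev: "even (r * n)" and m: "1 \<le> m" and mn: "4 * m \<le> n"
    and U: "U \<subseteq> {1..n}" and cU: "card U = m" and eta: "\<eta> \<ge> 0"
  shows "measure_pmf.prob (config_model n r)
             {f. real (card (boundary n r f U)) \<le> (real r - 2 - \<eta>) * real (card U)}
           \<le> exp (- (1 + \<eta> / 4) * real m * ln (real n / real m) + (real r * (2 + ln (4 * real r))) * real m)"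
proof -
  define s0 where "s0 = (real r - 2 - \<eta>) * real m"
  define Bnd where "Bnd = (2 * exp 1 * real r) ^ (m * r) * (real m / real n) powr ((1 + \<eta> / 2) * real m)"
  let ?S = "half_edges n r" and ?X = "Xs r U"
  let ?P = "pairs ?S"
  let ?E = "{f. real (card (boundary n r f U)) \<le> s0}"
  define w where "w I = (1 / (real (n * r) - 2 * real (m * r))) ^ ((m * r + card (?X - I)) div 2)" for I
  have finS: "finite ?S" unfolding half_edges_def by simp
  have finP: "finite ?P" by (rule finite_pairs[OF finS])
  have cP: "card ?P = pf (n * r)" using card_pairs[OF finS] card_half_edges by simp
  have Pne: "?P \<noteq> {}" using cP pf_pos[of "n * r"] ev by (auto simp: mult.commute)
  have cPpos: "real (card ?P) > 0" using cP pf_pos[of "n * r"] ev by (auto simp: mult.commute)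
  have finU: "finite U" using U finite_subset by blast
  have finX: "finite ?X" using finU unfolding Xs_def by simp
  have cX: "card ?X = m * r" unfolding Xs_def using cU by (simp add: card_cartesian_product)
  have finTs: "finite (Tset n r U s0 I)" for I
    by (rule finite_subset[of _ "Pow {1..n}"]) (auto simp: Tset_def)
  have finB: "finite (pairs I \<times> ((?X - I) \<rightarrow>\<^sub>E (T \<times> {..<r})))" if "I \<subseteq> ?X" "T \<in> Tset n r U s0 I" for I T
  proof -
    have "finite I" using that finX finite_subset by blast
    moreover have "T \<subseteq> {1..n}" using that(2) unfolding Tset_def by auto
    then have "finite T" by (rule finite_subset) simp
    ultimately show ?thesis using finX by (auto intro!: finite_pairs finite_PiE)
  qed
  have finIT: "finite (Sigma (Pow ?X) (Tset n r U s0))" using finX finTs by auto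
  have finEnc: "finite (Enc n r U s0)"
    unfolding Enc_def using finIT finB finX finTs by (intro finite_SigmaI) auto
  have L: "2 * card ?X < n * r"
  proof -
    have "2 * m < n" using m mn by linarith
    then have "(2 * m) * r < n * r" using r by (intro mult_strict_right_mono) auto
    then show ?thesis using cX by (simp add: mult.assoc)
  qed
  have prob: "measure_pmf.prob (config_model n r) ?E = real (card (?P \<inter> ?E)) / real (card ?P)"
    unfolding config_model_def pairings_eq using measure_pmf_of_set[OF Pne finP] by simp
  have "card (?P \<inter> ?E) \<le> card (\<Union>e\<in>Enc n r U s0. Aset n r U e)"
    by (rule card_mono[OF _ cover[OF U]]) (auto intro!: finite_UN_I finEnc simp: Aset_def finP)
  also have "\<dots> \<le> (\<Sum>e\<in>Enc n r U s0. card (Aset n r U e))" by (rule card_UN_le[OF finEnc])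
  finally have c1: "real (card (?P \<inter> ?E)) \<le> (\<Sum>e\<in>Enc n r U s0. real (card (Aset n r U e)))"
    unfolding of_nat_sum[symmetric] by (rule of_nat_mono)
  also have "\<dots> \<le> (\<Sum>e\<in>Enc n r U s0. real (card ?P) * w (fst (fst e)))"
  proof (intro sum_mono)
    fix e assume e: "e \<in> Enc n r U s0"
    obtain I T p h where eq: "e = ((I,T),(p,h))" by (metis prod.collapse)
    show "real (card (Aset n r U e)) \<le> real (card ?P) * w (fst (fst e))"
      using A_bound[OF U _ L, of I T p h s0] ev e cX unfolding eq w_def by (simp add: mult.commute)
  qed
  also have "\<dots> = real (card ?P) * (\<Sum>e\<in>Enc n r U s0. w (fst (fst e)))" by (simp add: sum_distrib_left)
  also have "(\<Sum>e\<in>Enc n r U s0. w (fst (fst e)))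
      = (\<Sum>I\<in>Pow ?X. \<Sum>T\<in>Tset n r U s0 I. real (pf (card I)) * (real (card T) * real r) ^ card (?X - I) * w I)"
  proof -
    have "(\<Sum>e\<in>Enc n r U s0. w (fst (fst e)))
        = (\<Sum>IT\<in>Sigma (Pow ?X) (Tset n r U s0). \<Sum>ph\<in>pairs (fst IT) \<times> ((?X - fst IT) \<rightarrow>\<^sub>E (snd IT \<times> {..<r})). w (fst IT))"
    proof -
      have fam: "(\<lambda>(I,T). pairs I \<times> ((?X - I) \<rightarrow>\<^sub>E (T \<times> {..<r})))
          = (\<lambda>IT. pairs (fst IT) \<times> ((?X - fst IT) \<rightarrow>\<^sub>E (snd IT \<times> {..<r})))"
        by (simp add: fun_eq_iff split_def)
      show ?thesis unfolding Enc_def fam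
        by (subst sum_Sigma') (use finIT finB in auto)
    qed
    also have "\<dots> = (\<Sum>IT\<in>Sigma (Pow ?X) (Tset n r U s0). real (pf (card (fst IT))) * (real (card (snd IT)) * real r) ^ card (?X - fst IT) * w (fst IT))"
    proof (intro sum.cong refl)
      fix IT assume IT: "IT \<in> Sigma (Pow ?X) (Tset n r U s0)"
      have fI: "finite (fst IT)" using IT finX finite_subset by auto
      have cI: "card (pairs (fst IT)) = pf (card (fst IT))" by (rule card_pairs[OF fI])
      have cPi: "card ((?X - fst IT) \<rightarrow>\<^sub>E (snd IT \<times> {..<r})) = (card (snd IT) * r) ^ card (?X - fst IT)"
        by (simp add: card_PiE finX card_cartesian_product)
      show "(\<Sum>ph\<in>pairs (fst IT) \<times> ((?X - fst IT) \<rightarrow>\<^sub>E (snd IT \<times> {..<r})). w (fst IT))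
          = real (pf (card (fst IT))) * (real (card (snd IT)) * real r) ^ card (?X - fst IT) * w (fst IT)"
        by (simp add: card_cartesian_product cI cPi)
    qed
    also have "\<dots> = (\<Sum>I\<in>Pow ?X. \<Sum>T\<in>Tset n r U s0 I. real (pf (card I)) * (real (card T) * real r) ^ card (?X - I) * w I)"
      by (subst sum.Sigma) (use finX finTs in \<open>auto simp: case_prod_beta split_def\<close>)
    finally show ?thesis .
  qed
  also have "(\<Sum>I\<in>Pow ?X. \<Sum>T\<in>Tset n r U s0 I. real (pf (card I)) * (real (card T) * real r) ^ card (?X - I) * w I)
      \<le> (\<Sum>I\<in>Pow ?X. real (m * r + 1) * Bnd)"
  proof (intro sum_mono)
    fix I assume "I \<in> Pow ?X"
    then show "(\<Sum>T\<in>Tset n r U s0 I. real (pf (card I)) * (real (card T) * real r) ^ card (?X - I) * w I) \<le> real (m * r + 1) * Bnd"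
      using T_sum_bound[OF m mn r U cU, of I \<eta>] unfolding w_def s0_def Bnd_def by simp
  qed
  also have "\<dots> = 2 ^ (m * r) * (real (m * r + 1) * Bnd)" using finX cX by (simp add: card_Pow)
  finally have c2: "real (card (?P \<inter> ?E)) \<le> real (card ?P) * (2 ^ (m * r) * (real (m * r + 1) * Bnd))"
    using cPpos by (simp add: mult_left_mono)
  have "measure_pmf.prob (config_model n r) ?E \<le> 2 ^ (m * r) * (real (m * r + 1) * Bnd)"
    unfolding prob using c2 cPpos by (simp add: divide_simps mult.commute)
  also have "\<dots> \<le> exp (- (1 + \<eta> / 4) * real m * ln (real n / real m) + (real r * (2 + ln (4 * real r))) * real m)"
    using final_arith[of m n r \<eta>] m mn r eta unfolding Bnd_def by (simp add: mult.assoc)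
  finally show ?thesis unfolding s0_def cU .
qed



lemma lemma5_aux:
  fixes r :: nat
  assumes "r \<ge> 3"
  shows "\<forall>\<eta>>0. \<exists>N. \<forall>n \<ge> N. even (r * n) \<longrightarrow>
      (\<forall>m::nat. 1 \<le> m \<longrightarrow> real m \<le> (\<lambda>_. 1/4 :: real) \<eta> * real n \<longrightarrow>
        (\<forall>U. U \<subseteq> {1..n} \<longrightarrow> card U = m \<longrightarrow>
           measure_pmf.prob (config_model n r)
             {f. real (card (boundary n r f U)) \<le> (real r - 2 - \<eta>) * real (card U)}
           \<le> 1 * exp (- (1 + \<eta> / 4) * real m * ln (real n / real m) + (real r * (2 + ln (4 * real r))) * real m)))"
proof (intro allI impI exI[of _ "0::nat"])
  fix \<eta> :: real and n m :: nat and U :: "nat set"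
  assume eta: "\<eta> > 0" and ev: "even (r * n)" and m: "1 \<le> m"
    and mn: "real m \<le> (\<lambda>_. 1/4 :: real) \<eta> * real n" and U: "U \<subseteq> {1..n}" and cU: "card U = m"
  have mn': "4 * m \<le> n" using mn by simp
  have r1: "1 \<le> r" using assms by simp
  have "measure_pmf.prob (config_model n r)
             {f. real (card (boundary n r f U)) \<le> (real r - 2 - \<eta>) * real (card U)}
           \<le> exp (- (1 + \<eta> / 4) * real m * ln (real n / real m) + (real r * (2 + ln (4 * real r))) * real m)"
    by (rule main_bound[OF r1 ev m mn' U cU]) (use eta in simp)
  then show "measure_pmf.prob (config_model n r)
             {f. real (card (boundary n r f U)) \<le> (real r - 2 - \<eta>) * real (card U)}
           \<le> 1 * exp (- (1 + \<eta> / 4) * real m * ln (real n / real m) + (real r * (2 + ln (4 * real r))) * real m)"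
    by simp
qed

theorem lemma5:
  fixes r :: nat
  assumes "r \<ge> 3"
  shows "\<exists>C7 D :: real. \<exists>eps5 :: real \<Rightarrow> real. (\<forall>\<eta>>0. eps5 \<eta> > 0) \<and>
    (\<forall>\<eta>>0. \<exists>N. \<forall>n \<ge> N. even (r * n) \<longrightarrow>
      (\<forall>m::nat. 1 \<le> m \<longrightarrow> real m \<le> eps5 \<eta> * real n \<longrightarrow>
        (\<forall>U. U \<subseteq> {1..n} \<longrightarrow> card U = m \<longrightarrow>
           measure_pmf.prob (config_model n r)
             {f. real (card (boundary n r f U)) \<le> (real r - 2 - \<eta>) * real (card U)}
           \<le> C7 * exp (- (1 + \<eta> / 4) * real m * ln (real n / real m) + D * real m))))"
proof -
  have A: "\<forall>\<eta>>0. (\<lambda>_. 1/4 :: real) \<eta> > 0" by simp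
  show ?thesis
    apply (rule exI[of _ 1])
    apply (rule exI[of _ "real r * (2 + ln (4 * real r))"])
    apply (rule exI[of _ "\<lambda>_. 1/4"])
    apply (rule conjI[OF A lemma5_aux[OF assms]])
    done
qed


end
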